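(* In the setting described in the context, for every edge state $\mathcal S=(S,\ell)$ with $S\subseteq I\times E$ and $\ell\in\{0,\dots,K\}^E$, the set $\Lambda(\mathcal S)=\{\lambda\ge0:\mathcal S(\lambda)=\mathcal S\}$ is convex.
   Context: Let $G=(V,E)$ be a directed graph and $I$ a finite set of commodities; commodity $i$ has source $s_i$, sink $t_i$, demand $d_i>0$. Flows are $x=(x_{i,e})\in\mathbb{R}^{I\times E}_{\ge0}$, feasible if for each $i$ they form an $s_i$–$t_i$ flow of value $d_i$; edge loads $x_e=\sum_ix_{i,e}$. The cost of edge $e$ under price $\lambda\ge0$ is $c^\lambda_e(x_e)=a_{e,k}x_e+b_{e,k}+g_e\lambda$ for $x_e\in[\sigma_{e,k},\sigma_{e,k+1})$, $k\in\{0,\dots,K\}$, with $0=\sigma_{e,0}<\dots<\sigma_{e,K}<\sigma_{e,K+1}=\infty$, $a_{e,k}>0$, $b_{e,k}\ge0$, $g_e\ge0$, such that $c^\lambda_e$ is continuous and strictly increasing; path costs are sums of edge costs; $\mathrm{WE}(\lambda)$ is the set of Wardrop equilibria (feasible flows using only minimum-cost paths per commodity). For each $\lambda$ the equilibrium edge loads $x_e$ are unique. Let $\phi_{i,v}(\lambda)$ be the length of a shortest $s_i$–$v$ path w.r.t. edge lengths $c^\lambda_e(x_e)$ for equilibrium loads $x_e$. The active support is $S(\lambda)=\{(i,e)\in I\times E: e=vw,\ c^\lambda_e(x_e)=\phi_{i,w}(\lambda)-\phi_{i,v}(\lambda)\}$, the vector of active function parts $\ell(\lambda)\in\{0,\dots,K\}^E$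 has $\ell_e$ the index with $x_e\in[\sigma_{e,\ell_e},\sigma_{e,\ell_e+1})$, and the edge state is $\mathcal S(\lambda)=(S(\lambda),\ell(\lambda))$. *)

theory Defs
  imports "HOL-Analysis.Analysis"
begin

record ('v, 'i) network =
  verts :: "'v set"
  edges :: "('v \<times> 'v) set"
  comms :: "'i set"
  src   :: "'i \<Rightarrow> 'v"
  snk   :: "'i \<Rightarrow> 'v"
  dem   :: "'i \<Rightarrow> real"
  npieces :: nat
  brk   :: "('v \<times> 'v) \<Rightarrow> nat \<Rightarrow> real"
  slope :: "('v \<times> 'v) \<Rightarrow> nat \<Rightarrow> real"
  offs  :: "('v \<times> 'v) \<Rightarrow> nat \<Rightarrow> real"
  pcoef :: "('v \<times> 'v) \<Rightarrow> real"

definition piece :: "('v, 'i) network \<Rightarrow> ('v \<times> 'v) \<Rightarrow> real \<Rightarrow> nat" where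
  "piece N e y = (THE k. k \<le> npieces N \<and> brk N e k \<le> y \<and>
                         (k < npieces N \<longrightarrow> y < brk N e (Suc k)))"

definition cost :: "('v, 'i) network \<Rightarrow> real \<Rightarrow> ('v \<times> 'v) \<Rightarrow> real \<Rightarrow> real" where
  "cost N lam e y = (let k = piece N e y in slope N e k * y + offs N e k + pcoef N e * lam)"

definition is_path :: "('v \<times> 'v) set \<Rightarrow> 'v \<Rightarrow> 'v \<Rightarrow> ('v \<times> 'v) list \<Rightarrow> bool" where
  "is_path E u v P \<longleftrightarrow> (\<exists>vs. length vs = Suc (length P) \<and> hd vs = u \<and> last vs = v \<and>
      distinct vs \<and> (\<forall>k < length P. P ! k = (vs ! k, vs ! Suc k)) \<and> set P \<subseteq> E)"

definition paths :: "('v \<times> 'v) set \<Rightarrow> 'v \<Rightarrow> 'v \<Rightarrow> ('v \<times> 'v) list set" where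
  "paths E u v = {P. is_path E u v P}"

definition path_cost :: "(('v \<times> 'v) \<Rightarrow> real) \<Rightarrow> ('v \<times> 'v) list \<Rightarrow> real" where
  "path_cost c P = sum_list (map c P)"

definition load :: "('v, 'i) network \<Rightarrow> ('i \<Rightarrow> ('v \<times> 'v) \<Rightarrow> real) \<Rightarrow> ('v \<times> 'v) \<Rightarrow> real" where
  "load N x e = (\<Sum>i\<in>comms N. x i e)"

definition feasible :: "('v, 'i) network \<Rightarrow> ('i \<Rightarrow> ('v \<times> 'v) \<Rightarrow> real) \<Rightarrow> bool" where
  "feasible N x \<longleftrightarrow>
     (\<forall>i\<in>comms N. \<forall>e\<in>edges N. x i e \<ge> 0) \<and>
     (\<forall>i\<in>comms N. \<forall>v\<in>verts N.
        (\<Sum>e\<in>{e\<in>edges N. fst e = v}. x i e) - (\<Sum>e\<in>{e\<in>edges N. snd e = v}. x i e)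
        = (if v = src N i then dem N i else 0) - (if v = snk N i then dem N i else 0))"

definition wardrop :: "('v, 'i) network \<Rightarrow> real \<Rightarrow> ('i \<Rightarrow> ('v \<times> 'v) \<Rightarrow> real) \<Rightarrow> bool" where
  "wardrop N lam x \<longleftrightarrow> feasible N x \<and>
     (\<forall>i\<in>comms N. \<exists>f :: ('v \<times> 'v) list \<Rightarrow> real.
        (\<forall>P\<in>paths (edges N) (src N i) (snk N i). f P \<ge> 0) \<and>
        (\<forall>e\<in>edges N. x i e = (\<Sum>P\<in>paths (edges N) (src N i) (snk N i).
                                   if e \<in> set P then f P else 0)) \<and>
        (\<forall>P\<in>paths (edges N) (src N i) (snk N i). f P > 0 \<longrightarrow>
           (\<forall>Q\<in>paths (edges N) (src N i) (snk N i).
              path_cost (\<lambda>e. cost N lam e (load N x e)) P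
              \<le> path_cost (\<lambda>e. cost N lam e (load N x e)) Q)))"

text \<open>Equilibrium edge loads (well defined when equilibria exist and loads are unique).\<close>
definition eq_load :: "('v, 'i) network \<Rightarrow> real \<Rightarrow> ('v \<times> 'v) \<Rightarrow> real" where
  "eq_load N lam = load N (SOME x. wardrop N lam x)"

text \<open>phi_{i,v}(lam): shortest s_i-v path length (infinity if v unreachable).\<close>
definition phi :: "('v, 'i) network \<Rightarrow> real \<Rightarrow> 'i \<Rightarrow> 'v \<Rightarrow> ereal" where
  "phi N lam i v = (INF P\<in>paths (edges N) (src N i) v.
                      ereal (path_cost (\<lambda>e. cost N lam e (eq_load N lam e)) P))"

definition active_support :: "('v, 'i) network \<Rightarrow> real \<Rightarrow> ('i \<times> ('v \<times> 'v)) set" where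
  "active_support N lam = {(i, e). i \<in> comms N \<and> e \<in> edges N \<and>
      phi N lam i (snd e) = phi N lam i (fst e) + ereal (cost N lam e (eq_load N lam e))}"

definition active_parts :: "('v, 'i) network \<Rightarrow> real \<Rightarrow> ('v \<times> 'v) \<Rightarrow> nat" where
  "active_parts N lam = (\<lambda>e. if e \<in> edges N then piece N e (eq_load N lam e) else 0)"

definition edge_state :: "('v, 'i) network \<Rightarrow> real \<Rightarrow> ('i \<times> ('v \<times> 'v)) set \<times> (('v \<times> 'v) \<Rightarrow> nat)" where
  "edge_state N lam = (active_support N lam, active_parts N lam)"

end

theory Submission
  imports Defs
begin


definition pathv :: "('v \<times> 'v) set \<Rightarrow> 'v \<Rightarrow> 'v \<Rightarrow> ('v \<times> 'v) list \<Rightarrow> 'v list \<Rightarrow> bool" where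
  "pathv E u v P vs \<longleftrightarrow> (length vs = Suc (length P) \<and> hd vs = u \<and> last vs = v \<and>
      distinct vs \<and> (\<forall>k < length P. P ! k = (vs ! k, vs ! Suc k)) \<and> set P \<subseteq> E)"

lemma paths_iff: "P \<in> paths E u v \<longleftrightarrow> (\<exists>vs. pathv E u v P vs)"
  unfolding paths_def is_path_def pathv_def by simp

definition sp :: "('v \<times> 'v) set \<Rightarrow> (('v \<times> 'v) \<Rightarrow> real) \<Rightarrow> 'v \<Rightarrow> 'v \<Rightarrow> ereal" where
  "sp E c s v = (INF P\<in>paths E s v. ereal (path_cost c P))"

lemma paths_self: "paths E s s = {[]}"
proof -
  have "P = []" if "pathv E s s P vs" for P vs
  proof (rule ccontr)
    assume "P \<noteq> []"
    then have l: "length vs \<ge> 2" using that unfolding pathv_def by (cases P) auto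
    then have "hd vs = vs ! 0" "last vs = vs ! (length vs - 1)"
    proof -
      have "vs \<noteq> []" using l by auto
      then show "hd vs = vs ! 0" "last vs = vs ! (length vs - 1)" by (simp_all add: hd_conv_nth last_conv_nth)
    qed
    moreover have "vs ! 0 \<noteq> vs ! (length vs - 1)"
      using that l \<open>P \<noteq> []\<close> unfolding pathv_def by (simp add: nth_eq_iff_index_eq)
    ultimately show False using that unfolding pathv_def by simp
  qed
  moreover have "pathv E s s [] [s]" unfolding pathv_def by simp
  ultimately show ?thesis by (auto simp: paths_iff)
qed

lemma sp_self: "sp E c s s = 0"
  unfolding sp_def paths_self path_cost_def by (simp add: zero_ereal_def)

lemma pathv_distinct: assumes "pathv E u v P vs" shows "distinct P"
proof -
  have "P ! i \<noteq> P ! j" if "i < length P" "j < length P" "i \<noteq> j" for i j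
  proof -
    have "vs ! i \<noteq> vs ! j" using assms that unfolding pathv_def by (simp add: nth_eq_iff_index_eq)
    then show ?thesis using assms that unfolding pathv_def by auto
  qed
  then show ?thesis by (simp add: distinct_conv_nth)
qed

lemma paths_finite: assumes "finite E" shows "finite (paths E u v)"
proof -
  have "paths E u v \<subseteq> {xs. set xs \<subseteq> E \<and> length xs \<le> card E}"
  proof
    fix P assume "P \<in> paths E u v"
    then obtain vs where p: "pathv E u v P vs" by (auto simp: paths_iff)
    then have "distinct P" "set P \<subseteq> E" by (auto intro: pathv_distinct simp: pathv_def)
    then have "length P \<le> card E" by (metis assms card_mono distinct_card)
    with \<open>set P \<subseteq> E\<close> show "P \<in> {xs. set xs \<subseteq> E \<and> length xs \<le> card E}" by simp
  qed
  then show ?thesis using finite_lists_length_le[OF assms] finite_subset by blast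
qed

lemma pathv_take: assumes "pathv E u v P vs" "k \<le> length P"
  shows "pathv E u (vs ! k) (take k P) (take (Suc k) vs)"
proof -
  have l: "length vs = Suc (length P)" using assms unfolding pathv_def by simp
  have "last (take (Suc k) vs) = vs ! k"
    using assms(2) l by (subst last_conv_nth) (auto simp: min_def)
  then show ?thesis
  using assms l unfolding pathv_def
  by (auto simp: hd_take  min_def nth_take dest: subsetD[OF set_take_subset])
qed

lemma pathv_snoc: assumes "pathv E u v P vs" "(v, w) \<in> E" "w \<notin> set vs"
  shows "pathv E u w (P @ [(v,w)]) (vs @ [w])"
proof -
  have vs: "vs \<noteq> []" using assms(1) unfolding pathv_def by auto
  have "(P @ [(v,w)]) ! k = ((vs @ [w]) ! k, (vs @ [w]) ! Suc k)" if "k < Suc (length P)" for k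
  proof (cases "k < length P")
    case True then show ?thesis using assms(1) unfolding pathv_def by (auto simp: nth_append)
  next
    case False then have "k = length P" using that by simp
    then show ?thesis using assms(1) vs unfolding pathv_def by (auto simp: nth_append last_conv_nth)
  qed
  then show ?thesis using assms vs unfolding pathv_def by auto
qed

lemma pathv_vs_nonempty: "pathv E u v P vs \<Longrightarrow> vs \<noteq> []" unfolding pathv_def by auto



lemma sp_le: "P \<in> paths E s v \<Longrightarrow> sp E c s v \<le> ereal (path_cost c P)"
  unfolding sp_def by (rule INF_lower)

lemma sp_unreach: "paths E s v = {} \<Longrightarrow> sp E c s v = \<infinity>"
  unfolding sp_def by (simp add: top_ereal_def)

lemma pc_nonneg: "\<forall>e\<in>E. c e \<ge> 0 \<Longrightarrow> set P \<subseteq> E \<Longrightarrow> path_cost c P \<ge> 0"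
  unfolding path_cost_def by (rule sum_list_nonneg) auto

lemma paths_sub: "P \<in> paths E s v \<Longrightarrow> set P \<subseteq> E"
  by (auto simp: paths_iff pathv_def)

lemma sp_nonneg: "\<forall>e\<in>E. c e \<ge> 0 \<Longrightarrow> sp E c s v \<ge> 0"
  unfolding sp_def by (rule INF_greatest) (auto dest: paths_sub pc_nonneg)

lemma sp_attain: assumes "finite E" "paths E s v \<noteq> {}"
  shows "\<exists>P\<in>paths E s v. sp E c s v = ereal (path_cost c P)"
proof -
  obtain P where P: "P \<in> paths E s v" "\<forall>Q\<in>paths E s v. path_cost c P \<le> path_cost c Q"
    using arg_min_if_finite[OF paths_finite[OF assms(1)] assms(2), of "path_cost c"]
    by (metis not_le)
  have "sp E c s v = ereal (path_cost c P)"
  proof (rule antisym)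
    show "sp E c s v \<le> ereal (path_cost c P)" by (rule sp_le[OF P(1)])
    show "ereal (path_cost c P) \<le> sp E c s v" unfolding sp_def using P by (auto intro: INF_greatest)
  qed
  with P show ?thesis by blast
qed

lemma pc_take_le: assumes "\<forall>e\<in>E. c e \<ge> 0" "set P \<subseteq> E"
  shows "path_cost c (take k P) \<le> path_cost c P"
proof -
  have "path_cost c P = path_cost c (take k P) + path_cost c (drop k P)"
    unfolding path_cost_def by (metis append_take_drop_id map_append sum_list_append)
  moreover have "path_cost c (drop k P) \<ge> 0"
    using assms by (intro pc_nonneg) (auto dest: in_set_dropD)
  ultimately show ?thesis by simp
qed

lemma sp_triangle: assumes fin: "finite E" and nn: "\<forall>e\<in>E. c e \<ge> 0"
  and r: "paths E s a \<noteq> {}" and e: "(a, b) \<in> E"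
  shows "paths E s b \<noteq> {} \<and> sp E c s b \<le> sp E c s a + ereal (c (a, b))"
proof -
  obtain P where P: "P \<in> paths E s a" "sp E c s a = ereal (path_cost c P)"
    using sp_attain[OF fin r] by blast
  then obtain vs where p: "pathv E s a P vs" by (auto simp: paths_iff)
  show ?thesis
  proof (cases "b \<in> set vs")
    case True
    then obtain j where j: "j < length vs" "vs ! j = b" by (metis in_set_conv_nth)
    then have jl: "j \<le> length P" using p unfolding pathv_def by simp
    have tp: "take j P \<in> paths E s b" using pathv_take[OF p jl] j by (auto simp: paths_iff)
    have "sp E c s b \<le> ereal (path_cost c (take j P))" by (rule sp_le[OF tp])
    also have "\<dots> \<le> ereal (path_cost c P)" using pc_take_le[OF nn] p unfolding pathv_def by simp
    also have "\<dots> \<le> sp E c s a + ereal (c (a, b))" using P nn e by simp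
    finally show ?thesis using tp by blast
  next
    case False
    have tp: "P @ [(a,b)] \<in> paths E s b" using pathv_snoc[OF p e False] by (auto simp: paths_iff)
    have "sp E c s b \<le> ereal (path_cost c (P @ [(a,b)]))" by (rule sp_le[OF tp])
    also have "\<dots> = sp E c s a + ereal (c (a, b))" using P by (simp add: path_cost_def)
    finally show ?thesis using tp by blast
  qed
qed

lemma sp_real: assumes "\<forall>e\<in>E. c e \<ge> 0" "paths E s v \<noteq> {}"
  shows "sp E c s v = ereal (real_of_ereal (sp E c s v))"
proof -
  obtain P where "P \<in> paths E s v" using assms by blast
  then have "sp E c s v \<le> ereal (path_cost c P)" by (rule sp_le)
  moreover have "sp E c s v \<ge> 0" using assms(1) by (rule sp_nonneg)
  ultimately show ?thesis by (metis ereal_real' ereal_infty_less_eq(2) ereal_infty_less(2) ereal_less_eq(1) MInfty_neq_ereal(1) PInfty_neq_ereal(1) abs_ereal_ge0 dual_order.trans not_less order.strict_iff_not zero_ereal_def  ereal_less_PInfty le_less_trans)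
qed

lemma telescope:
  fixes F :: "'v \<Rightarrow> ereal"
  assumes p: "pathv E s v P vs" and F0: "F s = 0"
    and t: "\<forall>k<length P. F (vs ! Suc k) = F (vs ! k) + ereal (c (P ! k))"
  shows "F v = ereal (path_cost c P)"
proof -
  have "F (vs ! k) = ereal (path_cost c (take k P))" if "k \<le> length P" for k
    using that
  proof (induction k)
    case 0
    have "vs ! 0 = s" using p unfolding pathv_def by (metis hd_conv_nth list.size(3) nat.distinct(1))
    then show ?case using F0 by (simp add: path_cost_def zero_ereal_def)
  next
    case (Suc k)
    then have "F (vs ! Suc k) = ereal (path_cost c (take k P)) + ereal (c (P ! k))" using t by simp
    then show ?case using Suc.prems by (simp add: path_cost_def take_Suc_conv_app_nth)
  qed
  moreover have "vs ! length P = v" using p unfolding pathv_def by (metis diff_Suc_1 last_conv_nth list.size(3) nat.distinct(1))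
  ultimately show ?thesis by (metis order_refl take_all)
qed



lemma pathv_last: "pathv E s v P vs \<Longrightarrow> vs ! length P = v"
  unfolding pathv_def by (metis diff_Suc_1 last_conv_nth list.size(3) nat.distinct(1))

lemma pathv_edge: assumes "pathv E s v P vs" "k < length P" shows "P ! k = (vs ! k, vs ! Suc k) \<and> P ! k \<in> E"
proof -
  have "P ! k \<in> set P" using assms(2) by (rule nth_mem)
  then show ?thesis using assms unfolding pathv_def by blast
qed

lemma sp_tight: assumes fin: "finite E" and nn: "\<forall>e\<in>E. c e \<ge> 0"
  and p: "pathv E s v P vs" and opt: "sp E c s v = ereal (path_cost c P)"
  shows "\<forall>k<length P. sp E c s (vs ! Suc k) = sp E c s (vs ! k) + ereal (c (P ! k))"
proof -
  define n where "n = length P"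
  define r where "r k = real_of_ereal (sp E c s (vs ! k))" for k
  define g where "g k = path_cost c (take k P) - r k" for k
  have reach: "take k P \<in> paths E s (vs ! k)" if "k \<le> n" for k
    using pathv_take[OF p] that n_def by (auto simp: paths_iff)
  have spr: "sp E c s (vs ! k) = ereal (r k)" if "k \<le> n" for k
    unfolding r_def using sp_real[OF nn] reach[OF that] by blast
  have step: "r (Suc k) \<le> r k + c (P ! k)" if "k < n" for k
  proof -
    have e: "P ! k = (vs ! k, vs ! Suc k)" "P ! k \<in> E" using pathv_edge[OF p, of k] that unfolding n_def by blast+
    have "sp E c s (vs ! Suc k) \<le> sp E c s (vs ! k) + ereal (c (P ! k))"
      using sp_triangle[OF fin nn, of s "vs ! k" "vs ! Suc k"] reach[of k] that e by auto
    then show ?thesis using spr[of k] spr[of "Suc k"] that by simp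
  qed
  have gmono: "g k \<le> g (Suc k)" if "k < n" for k
    using step[OF that] that n_def unfolding g_def by (simp add: path_cost_def take_Suc_conv_app_nth)
  have gn: "g n = 0"
  proof -
    have "sp E c s (vs ! n) = ereal (path_cost c P)" using opt pathv_last[OF p] n_def by simp
    then have "r n = path_cost c P" using spr[of n] by simp
    then show ?thesis unfolding g_def n_def by simp
  qed
  have gle: "g k \<le> g n" if "k \<le> n" for k
    using that
  proof (induction k rule: inc_induct)
    case base then show ?case by simp
  next
    case (step m) then show ?case using gmono[of m] by simp
  qed
  have gnn: "g k \<ge> 0" if "k \<le> n" for k
  proof -
    have "sp E c s (vs ! k) \<le> ereal (path_cost c (take k P))" by (rule sp_le[OF reach[OF that]])
    then show ?thesis using spr[OF that] unfolding g_def by simp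
  qed
  show ?thesis
  proof (intro allI impI)
    fix k assume k: "k < length P"
    then have "g k = 0" "g (Suc k) = 0" using gle[of k] gle[of "Suc k"] gnn[of k] gnn[of "Suc k"] gn n_def by auto
    then have "r (Suc k) = r k + c (P ! k)" using k n_def unfolding g_def
      by (simp add: path_cost_def take_Suc_conv_app_nth)
    then show "sp E c s (vs ! Suc k) = sp E c s (vs ! k) + ereal (c (P ! k))"
      using spr[of k] spr[of "Suc k"] k n_def by simp
  qed
qed



lemma sp_opt: assumes "P \<in> paths E s v" "\<forall>Q\<in>paths E s v. path_cost c P \<le> path_cost c Q"
  shows "sp E c s v = ereal (path_cost c P)"
proof (rule antisym)
  show "sp E c s v \<le> ereal (path_cost c P)" by (rule sp_le[OF assms(1)])
  show "ereal (path_cost c P) \<le> sp E c s v" unfolding sp_def using assms by (auto intro: INF_greatest)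
qed

context
  fixes E :: "('v \<times> 'v) set" and c1 c2 :: "('v \<times> 'v) \<Rightarrow> real" and s :: 'v
  assumes fin: "finite E" and nn1: "\<forall>e\<in>E. c1 e \<ge> 0" and nn2: "\<forall>e\<in>E. c2 e \<ge> 0"
    and T: "\<forall>e\<in>E. (sp E c1 s (snd e) = sp E c1 s (fst e) + ereal (c1 e)) \<longleftrightarrow>
                    (sp E c2 s (snd e) = sp E c2 s (fst e) + ereal (c2 e))"
begin

lemma tight_path: assumes p: "pathv E s w P vs" and o1: "sp E c1 s w = ereal (path_cost c1 P)"
  shows "sp E c2 s w = ereal (path_cost c2 P)"
proof (rule telescope[OF p sp_self])
  show "\<forall>k<length P. sp E c2 s (vs ! Suc k) = sp E c2 s (vs ! k) + ereal (c2 (P ! k))"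
  proof (intro allI impI)
    fix k assume k: "k < length P"
    have e: "P ! k = (vs ! k, vs ! Suc k)" "P ! k \<in> E" using pathv_edge[OF p k] by blast+
    have "sp E c1 s (vs ! Suc k) = sp E c1 s (vs ! k) + ereal (c1 (P ! k))"
      using sp_tight[OF fin nn1 p o1] k by blast
    then show "sp E c2 s (vs ! Suc k) = sp E c2 s (vs ! k) + ereal (c2 (P ! k))"
      using T e by (metis fst_conv snd_conv)
  qed
qed

lemma opt_transfer: assumes P: "P \<in> paths E s w" and o: "\<forall>Q\<in>paths E s w. path_cost c1 P \<le> path_cost c1 Q"
  shows "\<forall>Q\<in>paths E s w. path_cost c2 P \<le> path_cost c2 Q"
proof -
  obtain vs where p: "pathv E s w P vs" using P by (auto simp: paths_iff)
  have "sp E c2 s w = ereal (path_cost c2 P)" using tight_path[OF p sp_opt[OF P o]] .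
  then show ?thesis using sp_le by (metis ereal_less_eq(3))
qed

context
  fixes u v :: real and c :: "('v \<times> 'v) \<Rightarrow> real"
  assumes u: "u \<ge> 0" and v: "v \<ge> 0" and uv: "u + v = 1"
    and cc: "\<forall>e\<in>E. c e = u * c1 e + v * c2 e"
begin

lemma nnc: "\<forall>e\<in>E. c e \<ge> 0" using cc nn1 nn2 u v by simp

lemma pc_combo: "set P \<subseteq> E \<Longrightarrow> path_cost c P = u * path_cost c1 P + v * path_cost c2 P"
  by (induction P) (auto simp: path_cost_def algebra_simps cc)

lemma sp_combo: assumes r: "paths E s w \<noteq> {}"
  shows "sp E c s w = ereal (u * real_of_ereal (sp E c1 s w) + v * real_of_ereal (sp E c2 s w))"
proof (rule antisym)
  obtain P where P: "P \<in> paths E s w" "sp E c1 s w = ereal (path_cost c1 P)"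
    using sp_attain[OF fin r] by blast
  obtain vs where p: "pathv E s w P vs" using P by (auto simp: paths_iff)
  have "sp E c2 s w = ereal (path_cost c2 P)" by (rule tight_path[OF p P(2)])
  then have "path_cost c P = u * real_of_ereal (sp E c1 s w) + v * real_of_ereal (sp E c2 s w)"
    using P pc_combo[OF paths_sub[OF P(1)]] by simp
  then show "sp E c s w \<le> ereal (u * real_of_ereal (sp E c1 s w) + v * real_of_ereal (sp E c2 s w))"
    using sp_le[OF P(1), of c] by simp
next
  show "ereal (u * real_of_ereal (sp E c1 s w) + v * real_of_ereal (sp E c2 s w)) \<le> sp E c s w"
    unfolding sp_def[of E c s w]
  proof (rule INF_greatest)
    fix Q assume Q: "Q \<in> paths E s w"
    have "real_of_ereal (sp E c1 s w) \<le> path_cost c1 Q"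
      using sp_le[OF Q, of c1] sp_real[OF nn1 r] by (metis ereal_less_eq(3))
    moreover have "real_of_ereal (sp E c2 s w) \<le> path_cost c2 Q"
      using sp_le[OF Q, of c2] sp_real[OF nn2 r] by (metis ereal_less_eq(3))
    ultimately have "u * real_of_ereal (sp E c1 s w) + v * real_of_ereal (sp E c2 s w) \<le> path_cost c Q"
      using pc_combo[OF paths_sub[OF Q]] u v by (simp add: add_mono mult_left_mono)
    then show "ereal (u * real_of_ereal (sp E c1 s w) + v * real_of_ereal (sp E c2 s w)) \<le> ereal (path_cost c Q)"
      by simp
  qed
qed

lemma tight_combo: assumes e: "(a, b) \<in> E"
  shows "(sp E c s b = sp E c s a + ereal (c (a,b))) \<longleftrightarrow> (sp E c1 s b = sp E c1 s a + ereal (c1 (a,b)))"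
proof (cases "paths E s a = {}")
  case True
  have "sp E c s b = \<infinity> \<longleftrightarrow> paths E s b = {}" using sp_unreach sp_real[OF nnc] by (metis PInfty_neq_ereal(1))
  moreover have "sp E c1 s b = \<infinity> \<longleftrightarrow> paths E s b = {}" using sp_unreach sp_real[OF nn1] by (metis PInfty_neq_ereal(1))
  moreover have "sp E c s a = \<infinity>" "sp E c1 s a = \<infinity>" using sp_unreach[OF True] by auto
  ultimately show ?thesis by simp
next
  case False
  note r = False
  have rb: "paths E s b \<noteq> {}" using sp_triangle[OF fin nn1 r e] by blast
  define a1 where "a1 = real_of_ereal (sp E c1 s a)"
  define a2 where "a2 = real_of_ereal (sp E c2 s a)"
  define b1 where "b1 = real_of_ereal (sp E c1 s b)"
  define b2 where "b2 = real_of_ereal (sp E c2 s b)"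
  have A1: "sp E c1 s a = ereal a1" unfolding a1_def using sp_real[OF nn1 r] .
  have A2: "sp E c2 s a = ereal a2" unfolding a2_def using sp_real[OF nn2 r] .
  have B1: "sp E c1 s b = ereal b1" unfolding b1_def using sp_real[OF nn1 rb] .
  have B2: "sp E c2 s b = ereal b2" unfolding b2_def using sp_real[OF nn2 rb] .
  have t1: "b1 \<le> a1 + c1 (a,b)" using sp_triangle[OF fin nn1 r e] A1 B1 by simp
  have t2: "b2 \<le> a2 + c2 (a,b)" using sp_triangle[OF fin nn2 r e] A2 B2 by simp
  have TT: "b1 = a1 + c1 (a,b) \<longleftrightarrow> b2 = a2 + c2 (a,b)" using T e A1 A2 B1 B2 by fastforce
  have "sp E c s b = sp E c s a + ereal (c (a,b)) \<longleftrightarrow>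
        u * b1 + v * b2 = u * a1 + v * a2 + (u * c1 (a,b) + v * c2 (a,b))"
    using sp_combo[OF r] sp_combo[OF rb] cc e unfolding a1_def a2_def b1_def b2_def by simp
  also have "\<dots> \<longleftrightarrow> b1 = a1 + c1 (a,b)"
  proof
    assume h: "u * b1 + v * b2 = u * a1 + v * a2 + (u * c1 (a,b) + v * c2 (a,b))"
    show "b1 = a1 + c1 (a,b)"
    proof (rule ccontr)
      assume "b1 \<noteq> a1 + c1 (a,b)"
      then have "b1 < a1 + c1 (a,b)" "b2 < a2 + c2 (a,b)" using t1 t2 TT by auto
      then have "u * b1 + v * b2 < u * (a1 + c1 (a,b)) + v * (a2 + c2 (a,b))"
        using u v uv
        by (smt (verit, best) mult_left_mono mult_strict_left_mono)
      then show False using h by (simp add: algebra_simps)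
    qed
  next
    assume "b1 = a1 + c1 (a,b)"
    then show "u * b1 + v * b2 = u * a1 + v * a2 + (u * c1 (a,b) + v * c2 (a,b))"
      using TT by (simp add: algebra_simps)
  qed
  finally show ?thesis using A1 B1 by simp
qed

end
end



definition pk :: "('v, 'i) network \<Rightarrow> ('v \<times> 'v) \<Rightarrow> real \<Rightarrow> nat \<Rightarrow> bool" where
  "pk N e y k \<longleftrightarrow> k \<le> npieces N \<and> brk N e k \<le> y \<and> (k < npieces N \<longrightarrow> y < brk N e (Suc k))"

context
  fixes N :: "('v, 'i) network" and e :: "'v \<times> 'v"
  assumes b0: "brk N e 0 = 0" and bm: "\<forall>k<npieces N. brk N e k < brk N e (Suc k)"
begin

lemma brk_mono: "i \<le> j \<Longrightarrow> j \<le> npieces N \<Longrightarrow> brk N e i \<le> brk N e j"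
proof (induction j)
  case 0 then show ?case by simp
next
  case (Suc j)
  show ?case
  proof (cases "i = Suc j")
    case False
    then have "i \<le> j" using Suc.prems by simp
    then have "brk N e i \<le> brk N e j" using Suc by simp
    moreover have "brk N e j < brk N e (Suc j)" using bm Suc.prems by simp
    ultimately show ?thesis by simp
  qed simp
qed

lemma pk_unique: assumes "pk N e y i" "pk N e y j" shows "i = j"
proof (rule ccontr)
  assume "i \<noteq> j"
  then consider "i < j" | "j < i" by linarith
  then show False
  proof cases
    case 1
    then have "y < brk N e (Suc i)" using assms unfolding pk_def by auto
    moreover have "brk N e (Suc i) \<le> brk N e j" using 1 assms brk_mono[of "Suc i" j] unfolding pk_def by simp
    ultimately show False using assms unfolding pk_def by auto
  next
    case 2
    then have "y < brk N e (Suc j)" using assms unfolding pk_def by auto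
    moreover have "brk N e (Suc j) \<le> brk N e i" using 2 assms brk_mono[of "Suc j" i] unfolding pk_def by simp
    ultimately show False using assms unfolding pk_def by auto
  qed
qed

lemma pk_exists: assumes "0 \<le> y" shows "\<exists>k. pk N e y k"
proof -
  define A where "A = {k. k \<le> npieces N \<and> brk N e k \<le> y}"
  have fA: "finite A" "A \<noteq> {}" unfolding A_def using b0 assms by auto
  define k where "k = Max A"
  have kA: "k \<in> A" unfolding k_def using fA by simp
  have "y < brk N e (Suc k)" if "k < npieces N"
  proof (rule ccontr)
    assume "\<not> ?thesis"
    then have "Suc k \<in> A" using that unfolding A_def by auto
    then have "Suc k \<le> k" unfolding k_def using fA by simp
    then show False by simp
  qed
  then have "pk N e y k" using kA unfolding pk_def A_def by auto
  then show ?thesis by blast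
qed

lemma piece_pk: assumes "0 \<le> y" shows "pk N e y (piece N e y)"
proof -
  have "\<exists>!k. pk N e y k" using pk_exists[OF assms] pk_unique by blast
  then show ?thesis unfolding piece_def pk_def[symmetric] by (rule theI')
qed

lemma piece_eqI: assumes "0 \<le> y" "pk N e y k" shows "piece N e y = k"
  using pk_unique[OF piece_pk[OF assms(1)] assms(2)] .

end

lemma combo_strict: fixes u v :: real
  assumes "a1 < b" "a2 < b" "u \<ge> 0" "v \<ge> 0" "u + v = 1" shows "u * a1 + v * a2 < b"
proof (cases "u > 0")
  case True
  then have "u * a1 < u * b" using assms by simp
  moreover have "v * a2 \<le> v * b" using assms by (simp add: mult_left_mono)
  ultimately have "u * a1 + v * a2 < u * b + v * b" by simp
  also have "\<dots> = (u + v) * b" by (rule distrib_right[symmetric])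
  also have "\<dots> = b" using assms(5) by simp
  finally show ?thesis .
next
  case False
  then have "u = 0" "v = 1" using assms by auto
  then show ?thesis using assms by simp
qed

lemma pk_combo: assumes "pk N e y1 k" "pk N e y2 k" "u \<ge> 0" "v \<ge> 0" "u + v = (1::real)"
  shows "pk N e (u * y1 + v * y2) k"
proof -
  have "brk N e k = (u + v) * brk N e k" using assms(5) by simp
  also have "\<dots> = u * brk N e k + v * brk N e k" by (rule distrib_right)
  also have "u * brk N e k + v * brk N e k \<le> u * y1 + v * y2" using assms unfolding pk_def by (intro add_mono mult_left_mono) auto
  finally have 1: "brk N e k \<le> u * y1 + v * y2" .
  have 2: "u * y1 + v * y2 < brk N e (Suc k)" if "k < npieces N"
  proof -
    have "y1 < brk N e (Suc k)" "y2 < brk N e (Suc k)" using assms that unfolding pk_def by auto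
    then show ?thesis using assms(3-5) by (rule combo_strict)
  qed
  show ?thesis using 1 2 assms unfolding pk_def by auto
qed



lemma phi_sp: "phi N lam i v = sp (edges N) (\<lambda>e. cost N lam e (eq_load N lam e)) (src N i) v"
  unfolding phi_def sp_def ..

lemma cost_expand: "cost N lam e y = slope N e (piece N e y) * y + offs N e (piece N e y) + pcoef N e * lam"
  unfolding cost_def Let_def ..

theorem lemma5p4:
  fixes N :: "('v, 'i) network"
    and S :: "('i \<times> ('v \<times> 'v)) set"
    and l :: "('v \<times> 'v) \<Rightarrow> nat"
  assumes fin_V: "finite (verts N)"
    and E_sub: "edges N \<subseteq> verts N \<times> verts N"
    and fin_I: "finite (comms N)"
    and terminals: "\<forall>i\<in>comms N. src N i \<in> verts N \<and> snk N i \<in> verts N \<and> dem N i > 0"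
    and brk0: "\<forall>e\<in>edges N. brk N e 0 = 0"
    and brk_mono: "\<forall>e\<in>edges N. \<forall>k < npieces N. brk N e k < brk N e (Suc k)"
    and slope_pos: "\<forall>e\<in>edges N. \<forall>k \<le> npieces N. slope N e k > 0"
    and offs_nonneg: "\<forall>e\<in>edges N. \<forall>k \<le> npieces N. offs N e k \<ge> 0"
    and pcoef_nonneg: "\<forall>e\<in>edges N. pcoef N e \<ge> 0"
    and cost_cont: "\<forall>lam \<ge> 0. \<forall>e\<in>edges N. continuous_on {0..} (cost N lam e)"
    and cost_mono: "\<forall>lam \<ge> 0. \<forall>e\<in>edges N. strict_mono_on {0..} (cost N lam e)"
    and WE_exists: "\<forall>lam \<ge> 0. \<exists>x. wardrop N lam x"
    and WE_loads_unique: "\<forall>lam \<ge> 0. \<forall>x y. wardrop N lam x \<longrightarrow> wardrop N lam y \<longrightarrow>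
                             (\<forall>e\<in>edges N. load N x e = load N y e)"
    and S_sub: "S \<subseteq> comms N \<times> edges N"
    and l_range: "\<forall>e\<in>edges N. l e \<le> npieces N"
  shows "convex {lam :: real. lam \<ge> 0 \<and> edge_state N lam = (S, l)}"
proof -
  define E where "E = edges N"
  have fin: "finite E" unfolding E_def using E_sub fin_V by (meson finite_SigmaI finite_subset)
  define cl where "cl lam = (\<lambda>e. cost N lam e (eq_load N lam e))" for lam
  define X where "X lam = (SOME x. wardrop N lam x)" for lam
  have WX: "wardrop N lam (X lam)" if "lam \<ge> 0" for lam
    unfolding X_def using WE_exists that by (metis someI_ex)
  have eqX: "eq_load N lam = load N (X lam)" for lam unfolding eq_load_def X_def ..
  have load_nn: "load N x e \<ge> 0" if "wardrop N lam x" "e \<in> E" for x lam e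
    using that unfolding wardrop_def feasible_def load_def E_def by (auto intro: sum_nonneg)
  have eq_nn: "eq_load N lam e \<ge> 0" if "lam \<ge> 0" "e \<in> E" for lam e
    using load_nn[OF WX[OF that(1)] that(2)] eqX by simp
  have piece_pk': "pk N e y (piece N e y)" if "e \<in> E" "y \<ge> 0" for e y
    using piece_pk[of N e y] brk0 brk_mono that unfolding E_def by auto
  have cost_nn: "cost N lam e y \<ge> 0" if "lam \<ge> 0" "e \<in> E" "y \<ge> 0" for lam e y
  proof -
    have k: "piece N e y \<le> npieces N" using piece_pk'[OF that(2,3)] unfolding pk_def by simp
    show ?thesis unfolding cost_expand using slope_pos offs_nonneg pcoef_nonneg that k unfolding E_def
      by (metis add_nonneg_nonneg less_eq_real_def mult_nonneg_nonneg)
  qed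
  have cl_nn: "\<forall>e\<in>E. cl lam e \<ge> 0" if "lam \<ge> 0" for lam
    unfolding cl_def using cost_nn eq_nn that by blast
  have AS: "(i, e) \<in> active_support N lam \<longleftrightarrow>
      (sp E (cl lam) (src N i) (snd e) = sp E (cl lam) (src N i) (fst e) + ereal (cl lam e))"
    if "i \<in> comms N" "e \<in> E" for i e lam
    using that unfolding active_support_def phi_sp cl_def E_def by auto
  show ?thesis
    unfolding convex_def
  proof (intro ballI allI impI)
    fix a b :: real and u v :: real
    assume A: "a \<in> {lam. 0 \<le> lam \<and> edge_state N lam = (S, l)}"
      and B: "b \<in> {lam. 0 \<le> lam \<and> edge_state N lam = (S, l)}"
      and u: "0 \<le> u" and v: "0 \<le> v" and uv: "u + v = 1"
    have a0: "a \<ge> 0" and asa: "active_support N a = S" and apa: "active_parts N a = l"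
      using A unfolding edge_state_def by auto
    have b0: "b \<ge> 0" and asb: "active_support N b = S" and apb: "active_parts N b = l"
      using B unfolding edge_state_def by auto
    define lam where "lam = u * a + v * b"
    have lam0: "lam \<ge> 0" unfolding lam_def using a0 b0 u v by simp
    define x where "x = (\<lambda>i e. u * X a i e + v * X b i e)"
    have loadx: "load N x e = u * eq_load N a e + v * eq_load N b e" for e
      unfolding x_def load_def eqX by (simp add: sum.distrib sum_distrib_left)
    have pieceA: "piece N e (eq_load N a e) = l e" if "e \<in> E" for e
      using fun_cong[OF apa, of e] that unfolding active_parts_def E_def by simp
    have pieceB: "piece N e (eq_load N b e) = l e" if "e \<in> E" for e
      using fun_cong[OF apb, of e] that unfolding active_parts_def E_def by simp
    have pieceX: "piece N e (load N x e) = l e" if "e \<in> E" for e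
    proof -
      have "pk N e (eq_load N a e) (l e)" using piece_pk'[OF that eq_nn[OF a0 that]] pieceA[OF that] by simp
      moreover have "pk N e (eq_load N b e) (l e)" using piece_pk'[OF that eq_nn[OF b0 that]] pieceB[OF that] by simp
      ultimately have "pk N e (load N x e) (l e)" unfolding loadx using pk_combo u v uv by blast
      moreover have "load N x e \<ge> 0" unfolding loadx using eq_nn[OF a0 that] eq_nn[OF b0 that] u v by simp
      ultimately show ?thesis using piece_eqI[of N e] brk0 brk_mono that unfolding E_def by blast
    qed
    have costX: "cost N lam e (load N x e) = u * cl a e + v * cl b e" if "e \<in> E" for e
    proof -
      have "cost N lam e (load N x e) = slope N e (l e) * (u * eq_load N a e + v * eq_load N b e) + offs N e (l e) + pcoef N e * (u * a + v * b)"
        unfolding cost_expand unfolding pieceX[OF that] unfolding loadx lam_def ..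
      also have "\<dots> = u * (slope N e (l e) * eq_load N a e + offs N e (l e) + pcoef N e * a)
                   + v * (slope N e (l e) * eq_load N b e + offs N e (l e) + pcoef N e * b)"
        using uv by (simp add: algebra_simps) (metis distrib_right mult_1)
      also have "\<dots> = u * cl a e + v * cl b e"
        unfolding cl_def cost_expand pieceA[OF that] pieceB[OF that] ..
      finally show ?thesis .
    qed
    have T: "\<forall>e\<in>E. (sp E (cl a) (src N i) (snd e) = sp E (cl a) (src N i) (fst e) + ereal (cl a e)) \<longleftrightarrow>
                    (sp E (cl b) (src N i) (snd e) = sp E (cl b) (src N i) (fst e) + ereal (cl b e))"
      if "i \<in> comms N" for i
      using AS[OF that, of _ a] AS[OF that, of _ b] asa asb by blast
    have T': "\<forall>e\<in>E. (sp E (cl b) (src N i) (snd e) = sp E (cl b) (src N i) (fst e) + ereal (cl b e)) \<longleftrightarrow>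
                    (sp E (cl a) (src N i) (snd e) = sp E (cl a) (src N i) (fst e) + ereal (cl a e))"
      if "i \<in> comms N" for i
      using T[OF that] by blast
    have Wa: "wardrop N a (X a)" by (rule WX[OF a0])
    have Wb: "wardrop N b (X b)" by (rule WX[OF b0])
    have feas: "feasible N x"
    proof -
      have fa: "feasible N (X a)" "feasible N (X b)" using Wa Wb unfolding wardrop_def by auto
      have sd: "(\<Sum>e\<in>F. x i e) = u * (\<Sum>e\<in>F. X a i e) + v * (\<Sum>e\<in>F. X b i e)" for F i
        unfolding x_def by (simp add: sum.distrib sum_distrib_left)
      have r: "u * r + v * r = r" for r :: real using uv by (metis distrib_right mult_1)
      show ?thesis using fa u v unfolding feasible_def
        apply (intro conjI ballI)
         apply (simp add: x_def)
        apply (simp only: sd)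
        by (metis (no_types, lifting) r right_diff_distrib add_diff_add)
    qed
    have wx: "wardrop N lam x"
      unfolding wardrop_def
    proof (intro conjI feas ballI)
      fix i assume i: "i \<in> comms N"
      let ?Ps = "paths (edges N) (src N i) (snk N i)"
      obtain f1 where f1: "\<forall>P\<in>?Ps. f1 P \<ge> 0"
        "\<forall>e\<in>edges N. X a i e = (\<Sum>P\<in>?Ps. if e \<in> set P then f1 P else 0)"
        "\<forall>P\<in>?Ps. f1 P > 0 \<longrightarrow> (\<forall>Q\<in>?Ps. path_cost (\<lambda>e. cost N a e (load N (X a) e)) P \<le> path_cost (\<lambda>e. cost N a e (load N (X a) e)) Q)"
        using Wa i unfolding wardrop_def by blast
      obtain f2 where f2: "\<forall>P\<in>?Ps. f2 P \<ge> 0"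
        "\<forall>e\<in>edges N. X b i e = (\<Sum>P\<in>?Ps. if e \<in> set P then f2 P else 0)"
        "\<forall>P\<in>?Ps. f2 P > 0 \<longrightarrow> (\<forall>Q\<in>?Ps. path_cost (\<lambda>e. cost N b e (load N (X b) e)) P \<le> path_cost (\<lambda>e. cost N b e (load N (X b) e)) Q)"
        using Wb i unfolding wardrop_def by blast
      have clX: "cl lam' = (\<lambda>e. cost N lam' e (load N (X lam') e))" for lam' unfolding cl_def eqX ..
      define f where "f P = u * f1 P + v * f2 P" for P
      show "\<exists>f. (\<forall>P\<in>?Ps. f P \<ge> 0) \<and>
        (\<forall>e\<in>edges N. x i e = (\<Sum>P\<in>?Ps. if e \<in> set P then f P else 0)) \<and>
        (\<forall>P\<in>?Ps. f P > 0 \<longrightarrow>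
           (\<forall>Q\<in>?Ps. path_cost (\<lambda>e. cost N lam e (load N x e)) P \<le> path_cost (\<lambda>e. cost N lam e (load N x e)) Q))"
      proof (intro exI[of _ f] conjI ballI impI)
        fix P assume "P \<in> ?Ps" then show "f P \<ge> 0" unfolding f_def using f1 f2 u v by simp
      next
        fix e assume e: "e \<in> edges N"
        have "x i e = u * (\<Sum>P\<in>?Ps. if e \<in> set P then f1 P else 0) + v * (\<Sum>P\<in>?Ps. if e \<in> set P then f2 P else 0)"
          unfolding x_def using f1(2) f2(2) e by simp
        also have "\<dots> = (\<Sum>P\<in>?Ps. if e \<in> set P then f P else 0)"
        proof -
          have "\<And>P. (if e \<in> set P then f P else 0) = u * (if e \<in> set P then f1 P else 0) + v * (if e \<in> set P then f2 P else 0)"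
            by (simp add: f_def)
          then show ?thesis by (simp add: sum.distrib sum_distrib_left)
        qed
        finally show "x i e = (\<Sum>P\<in>?Ps. if e \<in> set P then f P else 0)" .
      next
        fix P Q assume P: "P \<in> ?Ps" and fP: "f P > 0" and Q: "Q \<in> ?Ps"
        have oa: "\<forall>Q\<in>?Ps. path_cost (cl a) P \<le> path_cost (cl a) Q" and ob: "\<forall>Q\<in>?Ps. path_cost (cl b) P \<le> path_cost (cl b) Q"
        proof -
          have "f1 P > 0 \<or> f2 P > 0" using fP f1(1) f2(1) P u v unfolding f_def
            by (metis add.right_neutral less_eq_real_def mult_zero_right)
          then have "(\<forall>Q\<in>?Ps. path_cost (cl a) P \<le> path_cost (cl a) Q) \<and> (\<forall>Q\<in>?Ps. path_cost (cl b) P \<le> path_cost (cl b) Q)"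
          proof
            assume "f1 P > 0"
            then have o1: "\<forall>Q\<in>?Ps. path_cost (cl a) P \<le> path_cost (cl a) Q" using f1(3) P unfolding clX by blast
            have "\<forall>Q\<in>?Ps. path_cost (cl b) P \<le> path_cost (cl b) Q"
              using opt_transfer[OF fin cl_nn[OF a0] cl_nn[OF b0] T[OF i]] P o1 unfolding E_def by blast
            with o1 show ?thesis by blast
          next
            assume "f2 P > 0"
            then have o2: "\<forall>Q\<in>?Ps. path_cost (cl b) P \<le> path_cost (cl b) Q" using f2(3) P unfolding clX by blast
            have "\<forall>Q\<in>?Ps. path_cost (cl a) P \<le> path_cost (cl a) Q"
              using opt_transfer[OF fin cl_nn[OF b0] cl_nn[OF a0] T'[OF i]] P o2 unfolding E_def by blast
            with o2 show ?thesis by blast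
          qed
          then show "\<forall>Q\<in>?Ps. path_cost (cl a) P \<le> path_cost (cl a) Q" "\<forall>Q\<in>?Ps. path_cost (cl b) P \<le> path_cost (cl b) Q" by blast+
        qed
        have cc: "\<forall>e\<in>E. cost N lam e (load N x e) = u * cl a e + v * cl b e" using costX by blast
        have pcx: "path_cost (\<lambda>e. cost N lam e (load N x e)) R = u * path_cost (cl a) R + v * path_cost (cl b) R"
          if "R \<in> ?Ps" for R
          using pc_combo[OF fin cl_nn[OF a0] cl_nn[OF b0] T[OF i] u v uv cc] paths_sub[OF that] unfolding E_def by blast
        show "path_cost (\<lambda>e. cost N lam e (load N x e)) P \<le> path_cost (\<lambda>e. cost N lam e (load N x e)) Q"
          unfolding pcx[OF P] pcx[OF Q] using oa ob Q u v by (simp add: add_mono mult_left_mono)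
      qed
    qed
    have eqlam: "eq_load N lam e = load N x e" if "e \<in> E" for e
      using WE_loads_unique lam0 WX[OF lam0] wx that unfolding eqX E_def by blast
    have cllam: "\<forall>e\<in>E. cl lam e = u * cl a e + v * cl b e"
      using costX eqlam unfolding cl_def by simp
    have ap: "active_parts N lam = l"
    proof
      fix e show "active_parts N lam e = l e"
      proof (cases "e \<in> E")
        case True then show ?thesis using pieceX eqlam unfolding active_parts_def E_def by simp
      next
        case False then show ?thesis using apa unfolding active_parts_def E_def by auto
      qed
    qed
    have as: "active_support N lam = S"
    proof -
      have "(i, e) \<in> active_support N lam \<longleftrightarrow> (i, e) \<in> active_support N a" for i e
      proof (cases "i \<in> comms N \<and> e \<in> E")
        case True
        then have i: "i \<in> comms N" and e: "e \<in> E" by auto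
        have e': "(fst e, snd e) \<in> E" using e by simp
        show ?thesis using AS[OF i e, of lam] AS[OF i e, of a]
          tight_combo[OF fin cl_nn[OF a0] cl_nn[OF b0] T[OF i] u v uv cllam e'] by simp
      next
        case False then show ?thesis unfolding active_support_def E_def by auto
      qed
      then show ?thesis using asa by auto
    qed
    show "u *\<^sub>R a + v *\<^sub>R b \<in> {lam. 0 \<le> lam \<and> edge_state N lam = (S, l)}"
      using lam0 ap as unfolding lam_def edge_state_def by simp
  qed
qed


end
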